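(* Let $\{f_n\}\subset\mathcal X_B$ converge in $(\mathcal X_M',\tau_{AW})$ to $f\in\mathcal X_M'$. Then one of the following holds: (1) $f$ is an MGF; (2) $f(0)<1$; (3) $f$ mimics an MGF, i.e. $f$ is not an MGF but there is a probability measure $\nu$ with $f(\theta)=f_\nu(\theta)$ for all $\theta\in\mathcal D_f$.
   Context: For a probability measure $\nu$ on $\mathbb R$ let $f_\nu(\theta)=\int e^{\theta x}\nu(dx)\in(0,\infty]$; a function is an MGF if it equals $f_\nu$ for some probability measure $\nu$. $\mathcal X_B=\{f_\nu:\nu$ a compactly supported probability measure on $\mathbb R\}$. For $f:\mathbb R\to[-\infty,\infty]$, $\mathrm{epi}(f)=\{(\theta,b):b\ge f(\theta)\}$, $\mathcal D_f=\{\theta:f(\theta)<\infty\}$. On $\mathbb R^2$ use the box metric $d(x,y)=\max(|x_1-y_1|,|x_2-y_2|)$, $d(x,A)=\inf_{y\in A}d(x,y)$. $\mathcal X_M'$ is the set of lower semicontinuous convex $f:\mathbb R\to[0,\infty]$ with $f(0)<\infty$, equipped with the Attouch–Wets topology $\tau_{AW}$: $f_n\to f$ iff for every bounded $B\subset\mathbb R^2$, $\sup_{x\in B}|d(x,\mathrm{epi}(f_n))-d(x,\mathrm{epi}(f))|\to0$. *)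

theory Defs
  imports "HOL-Analysis.Analysis" "HOL-Probability.Probability"
begin

definition mgf :: "real measure \<Rightarrow> real \<Rightarrow> ereal" where
  "mgf M \<theta> = enn2ereal (\<integral>\<^sup>+ x. ennreal (exp (\<theta> * x)) \<partial>M)"

definition real_prob_measure :: "real measure \<Rightarrow> bool" where
  "real_prob_measure M \<longleftrightarrow> prob_space M \<and> sets M = sets borel"

definition is_MGF :: "(real \<Rightarrow> ereal) \<Rightarrow> bool" where
  "is_MGF f \<longleftrightarrow> (\<exists>M. real_prob_measure M \<and> f = mgf M)"

definition in_XB :: "(real \<Rightarrow> ereal) \<Rightarrow> bool" where
  "in_XB f \<longleftrightarrow> (\<exists>M. real_prob_measure M \<and> (\<exists>K. compact K \<and> K \<in> sets M \<and> measure M K = 1)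
                    \<and> f = mgf M)"

definition epi :: "(real \<Rightarrow> ereal) \<Rightarrow> (real \<times> real) set" where
  "epi f = {(\<theta>, b). ereal b \<ge> f \<theta>}"

definition dom_f :: "(real \<Rightarrow> ereal) \<Rightarrow> real set" where
  "dom_f f = {\<theta>. f \<theta> < \<infinity>}"

definition box_dist :: "real \<times> real \<Rightarrow> real \<times> real \<Rightarrow> real" where
  "box_dist x y = max \<bar>fst x - fst y\<bar> \<bar>snd x - snd y\<bar>"

definition box_setdist :: "real \<times> real \<Rightarrow> (real \<times> real) set \<Rightarrow> real" where
  "box_setdist x A = (INF y\<in>A. box_dist x y)"

definition lsc_fun :: "(real \<Rightarrow> ereal) \<Rightarrow> bool" where
  "lsc_fun f \<longleftrightarrow> (\<forall>x. f x \<le> Liminf (at x) f)"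

definition convex_fun :: "(real \<Rightarrow> ereal) \<Rightarrow> bool" where
  "convex_fun f \<longleftrightarrow> (\<forall>x y t. 0 \<le> t \<and> t \<le> 1 \<longrightarrow>
      f (t * x + (1 - t) * y) \<le> ereal t * f x + ereal (1 - t) * f y)"

definition in_XM' :: "(real \<Rightarrow> ereal) \<Rightarrow> bool" where
  "in_XM' f \<longleftrightarrow> lsc_fun f \<and> convex_fun f \<and> (\<forall>\<theta>. f \<theta> \<ge> 0) \<and> f 0 < \<infinity>"

definition AW_conv :: "(nat \<Rightarrow> real \<Rightarrow> ereal) \<Rightarrow> (real \<Rightarrow> ereal) \<Rightarrow> bool" where
  "AW_conv fs f \<longleftrightarrow> (\<forall>B. bounded B \<longrightarrow>
     (\<forall>\<epsilon>>0. \<forall>\<^sub>F n in sequentially. \<forall>x\<in>B.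
        \<bar>box_setdist x (epi (fs n)) - box_setdist x (epi f)\<bar> \<le> \<epsilon>))"

definition mimics_MGF :: "(real \<Rightarrow> ereal) \<Rightarrow> bool" where
  "mimics_MGF f \<longleftrightarrow> \<not> is_MGF f \<and>
     (\<exists>M. real_prob_measure M \<and> (\<forall>\<theta>\<in>dom_f f. f \<theta> = mgf M \<theta>))"

end

theory Submission
  imports Defs
begin


lemma lsc_nbhd:
  assumes "lsc_fun f" "y < f x"
  shows "\<exists>d>0. \<forall>t. \<bar>t - x\<bar> < d \<longrightarrow> y < f t"
proof -
  have "y < Liminf (at x) f" using assms unfolding lsc_fun_def by (meson less_le_trans)
  then have "\<forall>\<^sub>F t in at x. y < f t" by (rule less_LiminfD)
  then obtain d where d: "d > 0" "\<And>t. t \<noteq> x \<Longrightarrow> dist t x < d \<Longrightarrow> y < f t"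
    unfolding eventually_at by auto
  show ?thesis
  proof (intro exI[of _ d] conjI allI impI)
    fix t assume "\<bar>t - x\<bar> < d"
    then show "y < f t" using d assms(2) by (cases "t = x") (auto simp: dist_real_def)
  qed (use d in auto)
qed

lemma box_dist_nonneg: "0 \<le> box_dist x y"
  by (simp add: box_dist_def)

lemma bsd_le: "y \<in> A \<Longrightarrow> box_setdist x A \<le> box_dist x y"
  unfolding box_setdist_def
  by (rule cINF_lower) (auto intro!: bdd_belowI[of _ 0] simp: box_dist_nonneg)

lemma bsd_nonneg: "A \<noteq> {} \<Longrightarrow> 0 \<le> box_setdist x A"
  unfolding box_setdist_def by (rule cINF_greatest) (auto simp: box_dist_nonneg)

lemma bsd_zero: "x \<in> A \<Longrightarrow> box_setdist x A = 0"
  using bsd_le[of x A x] bsd_nonneg[of A x] by (auto simp: box_dist_def)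

lemma bsd_lt: "A \<noteq> {} \<Longrightarrow> box_setdist x A < e \<Longrightarrow> \<exists>y\<in>A. box_dist x y < e"
  unfolding box_setdist_def
  by (subst (asm) cINF_less_iff) (auto intro!: bdd_belowI[of _ 0] simp: box_dist_nonneg)

lemma epi_ne: "f 0 < \<infinity> \<Longrightarrow> epi f \<noteq> {}"
proof -
  assume "f 0 < \<infinity>"
  then obtain b where "f 0 \<le> ereal b"
    by (cases "f 0") auto
  then show ?thesis unfolding epi_def by auto
qed

lemma AW_ev:
  assumes "AW_conv fs f" "bounded B" "e > 0"
  shows "\<forall>\<^sub>F n in sequentially. \<forall>x\<in>B. \<bar>box_setdist x (epi (fs n)) - box_setdist x (epi f)\<bar> \<le> e"
  using assms unfolding AW_conv_def by blast



lemma mgf_finite_cs: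
  assumes "real_prob_measure M" "compact K" "K \<in> sets M" "measure M K = 1"
  shows "(\<integral>\<^sup>+x. ennreal (exp (\<theta> * x)) \<partial>M) < \<infinity>"
proof -
  interpret prob_space M using assms(1) unfolding real_prob_measure_def by auto
  have sM: "sets M = sets borel" using assms(1) unfolding real_prob_measure_def by auto
  obtain R where R: "\<forall>x\<in>K. \<bar>x\<bar> \<le> R" using compact_imp_bounded[OF assms(2)] bounded_real by auto
  have ae: "AE x in M. x \<in> K" using AE_prob_1 assms(4) by auto
  have "AE x in M. ennreal (exp (\<theta> * x)) \<le> ennreal (exp (\<bar>\<theta>\<bar> * R))"
  proof (rule AE_mp[OF ae], intro AE_I2 impI)
    fix x assume "x \<in> K"
    then have "\<bar>x\<bar> \<le> R" using R by auto
    then have "\<bar>\<theta>\<bar> * \<bar>x\<bar> \<le> \<bar>\<theta>\<bar> * R" by (simp add: mult_left_mono)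
    moreover have "\<theta> * x \<le> \<bar>\<theta>\<bar> * \<bar>x\<bar>" by (metis abs_ge_self abs_mult)
    ultimately have "\<theta> * x \<le> \<bar>\<theta>\<bar> * R" by linarith
    then show "ennreal (exp (\<theta> * x)) \<le> ennreal (exp (\<bar>\<theta>\<bar> * R))" by simp
  qed
  then have "(\<integral>\<^sup>+x. ennreal (exp (\<theta> * x)) \<partial>M) \<le> (\<integral>\<^sup>+x. ennreal (exp (\<bar>\<theta>\<bar> * R)) \<partial>M)"
    by (rule nn_integral_mono_AE)
  also have "\<dots> = ennreal (exp (\<bar>\<theta>\<bar> * R))" by (simp add: emeasure_space_1)
  finally show ?thesis using ennreal_less_top[of "exp (\<bar>\<theta>\<bar> * R)"] by (simp add: le_less_trans)
qed

lemma mgf_pos: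
  assumes "prob_space M" "sets M = sets borel"
  shows "0 < (\<integral>\<^sup>+x. ennreal (exp (\<theta> * x)) \<partial>M)"
proof (rule ccontr)
  interpret prob_space M by fact
  assume "\<not> ?thesis"
  then have "(\<integral>\<^sup>+x. ennreal (exp (\<theta> * x)) \<partial>M) = 0" by (simp add: order.not_eq_order_implies_strict)
  then have "AE x in M. ennreal (exp (\<theta> * x)) = 0"
    by (subst (asm) nn_integral_0_iff_AE) (auto simp: measurable_cong_sets[OF assms(2) refl])
  then have "AE x in M. False" by simp
  then show False by simp
qed

lemma mgf_zero: "prob_space M \<Longrightarrow> mgf M 0 = 1"
  by (simp add: mgf_def prob_space.emeasure_space_1 one_ennreal.rep_eq)



lemma chord:
  fixes F :: "real \<Rightarrow> real"
  assumes conv: "\<And>x y l. 0 \<le> l \<Longrightarrow> l \<le> 1 \<Longrightarrow> F (l*x+(1-l)*y) \<le> l * F x + (1-l) * F y"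
    and "x < y" "x \<le> t" "t \<le> y"
  shows "F t \<le> F x + (t - x) / (y - x) * (F y - F x)"
    and "F t \<le> F y + (y - t) / (y - x) * (F x - F y)"
proof -
  define l where "l = (y - t) / (y - x)"
  have l: "0 \<le> l" "l \<le> 1" using assms(2-4) by (auto simp: l_def field_simps)
  have e0: "l * (y - x) = y - t" using assms(2) unfolding l_def by simp
  have e: "l * y - l * x = y - t" using e0 by (simp add: algebra_simps)
  have t: "t = l * x + (1 - l) * y" using e by (simp add: algebra_simps)
  have 1: "1 - l = (t - x) / (y - x)" using assms(2) by (simp add: l_def field_simps)
  have main: "F t \<le> l * F x + (1-l) * F y" using conv[OF l, of x y] t by simp
  define q where "q = (t - x) / (y - x)"
  have lq: "l = 1 - q" using 1 unfolding q_def by simp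
  have "F t \<le> F x + q * (F y - F x)" using main unfolding lq by (simp add: algebra_simps)
  then show "F t \<le> F x + (t - x) / (y - x) * (F y - F x)" by (simp add: q_def)
  have "F t \<le> F y + l * (F x - F y)" using main by (simp add: algebra_simps)
  then show "F t \<le> F y + (y - t) / (y - x) * (F x - F y)" by (simp add: l_def)
qed

lemma chord_bound:
  fixes F :: "real \<Rightarrow> real"
  assumes conv: "\<And>x y l. 0 \<le> l \<Longrightarrow> l \<le> 1 \<Longrightarrow> F (l*x+(1-l)*y) \<le> l * F x + (1-l) * F y"
    and nn: "\<And>z. 0 \<le> F z"
    and "x < y" "x \<le> t" "t \<le> y" "D > 0" "y - x \<ge> D"
  shows "F x \<le> A \<Longrightarrow> F y \<le> K \<Longrightarrow> t - x \<le> d \<Longrightarrow> F t \<le> A + d / D * K"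
    and "F y \<le> A \<Longrightarrow> F x \<le> K \<Longrightarrow> y - t \<le> d \<Longrightarrow> F t \<le> A + d / D * K"
proof -
  have q1: "0 \<le> (t - x) / (y - x)" "0 \<le> (y - t) / (y - x)" using assms by auto
  {
    assume a: "F x \<le> A" "F y \<le> K" "t - x \<le> d"
    have "(t - x) / (y - x) * (F y - F x) \<le> (t - x) / (y - x) * F y"
      by (rule mult_left_mono) (use nn[of x] q1 in auto)
    also have "\<dots> \<le> d / D * K"
    proof (rule mult_mono)
      show "(t - x) / (y - x) \<le> d / D" using assms a by (intro frac_le) auto
      show "F y \<le> K" by fact
      show "0 \<le> d / D" using assms a by auto
      show "0 \<le> F y" by (rule nn)
    qed
    finally show "F t \<le> A + d / D * K" using chord(1)[OF conv assms(3-5)] a by linarith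
  }
  {
    assume a: "F y \<le> A" "F x \<le> K" "y - t \<le> d"
    have "(y - t) / (y - x) * (F x - F y) \<le> (y - t) / (y - x) * F x"
      by (rule mult_left_mono) (use nn[of y] q1 in auto)
    also have "\<dots> \<le> d / D * K"
    proof (rule mult_mono)
      show "(y - t) / (y - x) \<le> d / D" using assms a by (intro frac_le) auto
      show "F x \<le> K" by fact
      show "0 \<le> d / D" using assms a by auto
      show "0 \<le> F x" by (rule nn)
    qed
    finally show "F t \<le> A + d / D * K" using chord(2)[OF conv assms(3-5)] a by linarith
  }
qed



context
  fixes fs :: "nat \<Rightarrow> real \<Rightarrow> ereal" and f :: "real \<Rightarrow> ereal" and F :: "nat \<Rightarrow> real \<Rightarrow> real"
  assumes fsF: "\<And>n \<theta>. fs n \<theta> = ereal (F n \<theta>)"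
    and Fnn: "\<And>n \<theta>. 0 \<le> F n \<theta>"
    and Fconv: "\<And>n x y l. 0 \<le> l \<Longrightarrow> l \<le> 1 \<Longrightarrow> F n (l*x+(1-l)*y) \<le> l * F n x + (1-l) * F n y"
    and fX: "in_XM' f"
    and AW: "AW_conv fs f"
begin

lemma f_lsc: "lsc_fun f" using fX unfolding in_XM'_def by auto
lemma f_nn: "0 \<le> f x" using fX unfolding in_XM'_def by auto
lemma epi_f_ne: "epi f \<noteq> {}" using fX epi_ne unfolding in_XM'_def by auto
lemma epi_fs_ne: "epi (fs n) \<noteq> {}" using epi_ne[of "fs n"] by (simp add: fsF)

lemma mem_epi: "(a, b) \<in> epi g \<longleftrightarrow> g a \<le> ereal b" by (simp add: epi_def)

lemma f0_le:
  assumes "\<And>n. F n 0 = 1"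
  shows "f 0 \<le> 1"
proof (rule ccontr)
  assume "\<not> f 0 \<le> 1"
  then have lt: "1 < f 0" by simp
  have fin: "f 0 < \<infinity>" using fX unfolding in_XM'_def by auto
  obtain a where a: "f 0 = ereal a" using lt fin by (cases "f 0") auto
  define y where "y = (1 + a) / 2"
  have y: "1 < y" "ereal y < f 0" using lt a by (auto simp: y_def)
  obtain d where d: "d > 0" "\<And>t. \<bar>t - 0\<bar> < d \<Longrightarrow> ereal y < f t" using lsc_nbhd[OF f_lsc y(2)] by auto
  define e where "e = min d (y - 1) / 2"
  have e: "e > 0" using d y by (auto simp: e_def)
  have "\<forall>\<^sub>F n in sequentially. \<forall>x\<in>{(0,1)}. \<bar>box_setdist x (epi (fs n)) - box_setdist x (epi f)\<bar> \<le> e"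
    by (rule AW_ev[OF AW _ e]) auto
  then obtain n where n: "\<bar>box_setdist (0,1) (epi (fs n)) - box_setdist (0,1) (epi f)\<bar> \<le> e"
    unfolding eventually_sequentially by blast
  have "(0,1) \<in> epi (fs n)" using assms by (simp add: mem_epi fsF)
  then have "box_setdist (0,1) (epi (fs n)) = 0" by (rule bsd_zero)
  with n have "box_setdist (0,1) (epi f) < 2 * e" using e by auto
  then obtain p where p: "p \<in> epi f" "box_dist (0,1) p < 2 * e" using bsd_lt[OF epi_f_ne] by blast
  obtain t b where pb: "p = (t, b)" by (cases p)
  have "\<bar>t\<bar> < d" "\<bar>1 - b\<bar> < y - 1" using p pb by (auto simp: box_dist_def e_def)
  then have "ereal y < f t" "b < y" using d by auto
  moreover have "f t \<le> ereal b" using p pb by (simp add: mem_epi)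
  ultimately have "ereal y < ereal b" by (meson less_le_trans)
  then show False using \<open>b < y\<close> by simp
qed

lemma lowerD:
  assumes "f t = ereal a" "\<epsilon> > 0"
  shows "\<forall>\<^sub>F n in sequentially. a - \<epsilon> \<le> F n t"
proof -
  have y: "ereal (a - \<epsilon>/2) < f t" using assms by simp
  obtain d where d: "d > 0" "\<And>s. \<bar>s - t\<bar> < d \<Longrightarrow> ereal (a - \<epsilon>/2) < f s"
    using lsc_nbhd[OF f_lsc y] by auto
  define e where "e = min d (\<epsilon>/2) / 2"
  have e: "e > 0" using d assms by (auto simp: e_def)
  define B where "B = {t} \<times> {-1..a+1}"
  have bB: "bounded B" unfolding B_def by (intro bounded_Times) auto
  have ev: "\<forall>\<^sub>F n in sequentially. \<forall>x\<in>B. \<bar>box_setdist x (epi (fs n)) - box_setdist x (epi f)\<bar> \<le> e"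
    by (rule AW_ev[OF AW bB e])
  show ?thesis
  proof (rule eventually_mono[OF ev], rule ccontr)
    fix n assume H: "\<forall>x\<in>B. \<bar>box_setdist x (epi (fs n)) - box_setdist x (epi f)\<bar> \<le> e"
      and nl: "\<not> a - \<epsilon> \<le> F n t"
    have xB: "(t, F n t) \<in> B" using nl Fnn[of n t] assms(2) unfolding B_def by auto
    have "(t, F n t) \<in> epi (fs n)" by (simp add: mem_epi fsF)
    then have "box_setdist (t, F n t) (epi (fs n)) = 0" by (rule bsd_zero)
    moreover have "\<bar>box_setdist (t, F n t) (epi (fs n)) - box_setdist (t, F n t) (epi f)\<bar> \<le> e"
      using H xB by blast
    ultimately have "box_setdist (t, F n t) (epi f) < 2 * e" using e by linarith
    then obtain p where p: "p \<in> epi f" "box_dist (t, F n t) p < 2 * e" using bsd_lt[OF epi_f_ne] by blast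
    obtain s b where pb: "p = (s, b)" by (cases p)
    have "box_dist (t, F n t) (s, b) < min d (\<epsilon>/2)" using p pb by (simp add: e_def)
    then have "\<bar>t - s\<bar> < d" "\<bar>F n t - b\<bar> < \<epsilon>/2"
      unfolding box_dist_def fst_conv snd_conv by (simp_all only: max_less_iff_conj min_less_iff_conj)
    then have "ereal (a - \<epsilon>/2) < f s" using d(2)[of s] by (simp add: abs_minus_commute)
    have "b < F n t + \<epsilon>/2" using \<open>\<bar>F n t - b\<bar> < \<epsilon>/2\<close> by (simp only: abs_less_iff) linarith
    then have "b < a - \<epsilon>/2" using nl by linarith
    note this \<open>ereal (a - \<epsilon>/2) < f s\<close>
    have "f s \<le> ereal b" using p pb by (simp add: mem_epi)
    then have "ereal (a - \<epsilon>/2) < ereal b" using \<open>ereal (a - \<epsilon>/2) < f s\<close> by (meson less_le_trans)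
    then show False using \<open>b < a - \<epsilon>/2\<close> by simp
  qed
qed

lemma fin_real: "f s < \<infinity> \<Longrightarrow> f s = ereal (real_of_ereal (f s))"
  using f_nn[of s] by (cases "f s") auto

lemma fin_real_nn: "0 \<le> real_of_ereal (f s)"
  using f_nn[of s] by (cases "f s") auto

lemma upperE:
  assumes r: "r > 0" and fin: "\<And>s. \<bar>s - t\<bar> \<le> r \<Longrightarrow> f s < \<infinity>" and eps: "\<epsilon> > 0"
  shows "\<forall>\<^sub>F n in sequentially. F n t \<le> real_of_ereal (f t) + \<epsilon>"
proof -
  define a where "a = real_of_ereal (f t)"
  define a1 where "a1 = real_of_ereal (f (t - r))"
  define a2 where "a2 = real_of_ereal (f (t + r))"
  have fa: "f t = ereal a" "f (t - r) = ereal a1" "f (t + r) = ereal a2"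
    unfolding a_def a1_def a2_def using fin_real fin r by auto
  have a12: "0 \<le> a1" "0 \<le> a2" unfolding a1_def a2_def by (auto simp: fin_real_nn)
  define K where "K = a1 + a2 + 2"
  define \<eta> where "\<eta> = min (r/4) (min (1/2) (\<epsilon> / (2 + 4*K/r)))"
  have "0 \<le> 4*K/r" using a12 r by (simp add: K_def)
  then have Kp: "0 < 2 + 4*K/r" by linarith
  have \<eta>: "\<eta> > 0" "\<eta> \<le> r/4" "\<eta> \<le> 1/2" "\<eta> \<le> \<epsilon> / (2 + 4*K/r)"
    using r eps Kp unfolding \<eta>_def by (simp, (meson min.cobounded1 min.cobounded2 order_trans)+)
  define B where "B = {(t, a), (t - r, a1), (t + r, a2)}"
  have bB: "bounded B" unfolding B_def by simp
  have Bepi: "p \<in> epi f" if "p \<in> B" for p using that fa unfolding B_def by (auto simp: mem_epi)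
  have ev: "\<forall>\<^sub>F n in sequentially. \<forall>x\<in>B. \<bar>box_setdist x (epi (fs n)) - box_setdist x (epi f)\<bar> \<le> \<eta>"
    by (rule AW_ev[OF AW bB \<eta>(1)])
  show ?thesis
  proof (rule eventually_mono[OF ev])
    fix n assume H: "\<forall>x\<in>B. \<bar>box_setdist x (epi (fs n)) - box_setdist x (epi f)\<bar> \<le> \<eta>"
    have near: "\<exists>\<theta>. \<bar>\<theta> - s\<bar> < 2*\<eta> \<and> F n \<theta> < c + 2*\<eta>" if sc: "(s, c) \<in> B" for s c
    proof -
      have "box_setdist (s, c) (epi f) = 0" using Bepi[OF sc] by (rule bsd_zero)
      moreover have "\<bar>box_setdist (s, c) (epi (fs n)) - box_setdist (s, c) (epi f)\<bar> \<le> \<eta>" using H sc by blast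
      ultimately have "box_setdist (s, c) (epi (fs n)) < 2*\<eta>" using \<eta> by linarith
      then obtain q where q: "q \<in> epi (fs n)" "box_dist (s, c) q < 2*\<eta>" using bsd_lt[OF epi_fs_ne] by blast
      obtain \<theta> b where qb: "q = (\<theta>, b)" by (cases q)
      have "\<bar>s - \<theta>\<bar> < 2*\<eta>" "\<bar>c - b\<bar> < 2*\<eta>" using q(2) unfolding qb box_dist_def fst_conv snd_conv
        by (simp_all only: max_less_iff_conj)
      moreover have "F n \<theta> \<le> b" using q(1) unfolding qb by (simp add: mem_epi fsF)
      ultimately show ?thesis by (intro exI[of _ \<theta>]) (auto simp: abs_less_iff)
    qed
    obtain \<theta>0 where t0: "\<bar>\<theta>0 - t\<bar> < 2*\<eta>" "F n \<theta>0 < a + 2*\<eta>" using near[of t a] by (auto simp: B_def)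
    obtain \<theta>1 where t1: "\<bar>\<theta>1 - (t - r)\<bar> < 2*\<eta>" "F n \<theta>1 < a1 + 2*\<eta>" using near[of "t - r" a1] by (auto simp: B_def)
    obtain \<theta>2 where t2: "\<bar>\<theta>2 - (t + r)\<bar> < 2*\<eta>" "F n \<theta>2 < a2 + 2*\<eta>" using near[of "t + r" a2] by (auto simp: B_def)
    have cv: "\<And>x y l. 0 \<le> l \<Longrightarrow> l \<le> 1 \<Longrightarrow> F n (l*x+(1-l)*y) \<le> l * F n x + (1-l) * F n y" by (rule Fconv)
    have nn: "\<And>z. 0 \<le> F n z" by (rule Fnn)
    have D: "r/2 > 0" using r by simp
    have bnd: "F n t \<le> (a + 2*\<eta>) + 2*\<eta> / (r/2) * K"
    proof (cases "\<theta>0 \<le> t")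
      case True
      have "\<theta>2 > t + r/2" using t2 \<eta> by (auto simp: abs_less_iff)
      show ?thesis
        by (rule chord_bound(1)[OF cv nn, of \<theta>0 \<theta>2 t "r/2"]) (use True t0 t2 \<eta> a12 D \<open>\<theta>2 > t + r/2\<close> in \<open>auto simp: K_def abs_less_iff\<close>)
    next
      case False
      have "\<theta>1 < t - r/2" using t1 \<eta> by (auto simp: abs_less_iff)
      show ?thesis
        by (rule chord_bound(2)[OF cv nn, of \<theta>1 \<theta>0 t "r/2"]) (use False t0 t1 \<eta> a12 D \<open>\<theta>1 < t - r/2\<close> in \<open>auto simp: K_def abs_less_iff\<close>)
    qed
    have e1: "2*\<eta> + 2*\<eta> / (r/2) * K = \<eta> * (2 + 4*K/r)" using r by (simp add: field_simps)
    have e2: "\<eta> * (2 + 4*K/r) \<le> \<epsilon>" using \<eta>(4) Kp by (simp add: le_divide_eq)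
    show "F n t \<le> real_of_ereal (f t) + \<epsilon>" using bnd e1 e2 unfolding a_def[symmetric] by linarith
  qed
qed

end


lemma F_conv:
  assumes fsF: "\<And>n \<theta>. fs n \<theta> = ereal (F n \<theta>)"
    and Fnn: "\<And>n \<theta>. 0 \<le> F n \<theta>"
    and Fconv: "\<And>n x y l. 0 \<le> l \<Longrightarrow> l \<le> 1 \<Longrightarrow> F n (l*x+(1-l)*y) \<le> l * F n x + (1-l) * F n y"
    and fX: "in_XM' f"
    and AW: "AW_conv fs f"
    and r: "r > 0" and fin: "\<And>s. \<bar>s - t\<bar> \<le> r \<Longrightarrow> f s < \<infinity>"
  shows "(\<lambda>n. F n t) \<longlonglongrightarrow> real_of_ereal (f t)"
proof (rule order_tendstoI)
  have ft: "f t = ereal (real_of_ereal (f t))" using fin_real[OF fsF Fnn Fconv fX AW] fin[of t] r by simp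
  fix y assume y: "y < real_of_ereal (f t)"
  have "0 < (real_of_ereal (f t) - y)/2" using y by simp
  then have "\<forall>\<^sub>F n in sequentially. real_of_ereal (f t) - (real_of_ereal (f t) - y)/2 \<le> F n t"
    using lowerD[OF fsF Fnn Fconv fX AW ft] by blast
  then show "\<forall>\<^sub>F n in sequentially. y < F n t" by (rule eventually_mono) (insert y, simp add: field_simps)
next
  fix y assume y: "real_of_ereal (f t) < y"
  have "\<forall>\<^sub>F n in sequentially. F n t \<le> real_of_ereal (f t) + (y - real_of_ereal (f t))/2"
    by (rule upperE[OF fsF Fnn Fconv fX AW r fin]) (use y in auto)
  then show "\<forall>\<^sub>F n in sequentially. F n t < y" by (rule eventually_mono) (insert y, simp add: field_simps)
qed

definition intp :: "(real \<Rightarrow> ereal) \<Rightarrow> real \<Rightarrow> bool" where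
  "intp f t \<longleftrightarrow> (\<exists>r>0. \<forall>s. \<bar>s - t\<bar> \<le> r \<longrightarrow> f s < \<infinity>)"

lemma conv_fin:
  assumes "convex_fun f" "\<And>x. 0 \<le> f x" "f x < \<infinity>" "f y < \<infinity>" "0 \<le> l" "l \<le> 1"
  shows "f (l * x + (1 - l) * y) < \<infinity>"
proof -
  obtain a where a: "f x = ereal a" using assms(2)[of x] assms(3) by (cases "f x") auto
  obtain b where b: "f y = ereal b" using assms(2)[of y] assms(4) by (cases "f y") auto
  note ab = a b
  have "f (l * x + (1 - l) * y) \<le> ereal l * f x + ereal (1 - l) * f y"
    using assms(1,5,6) unfolding convex_fun_def by blast
  also have "\<dots> = ereal (l * a + (1 - l) * b)" using ab by simp
  finally show ?thesis by (rule le_less_trans) simp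
qed

lemma intp_seg:
  assumes cf: "convex_fun f" and nn: "\<And>x. 0 \<le> f x"
    and r: "r > 0" "\<And>s. \<bar>s - c\<bar> \<le> r \<Longrightarrow> f s < \<infinity>"
    and th: "f \<theta> < \<infinity>" and l: "0 < l" "l \<le> 1"
  shows "\<bar>s - (l * c + (1 - l) * \<theta>)\<bar> \<le> l * r \<Longrightarrow> f s < \<infinity>"
proof -
  assume s: "\<bar>s - (l * c + (1 - l) * \<theta>)\<bar> \<le> l * r"
  define c' where "c' = (s - (1 - l) * \<theta>) / l"
  have sc: "s = l * c' + (1 - l) * \<theta>" using l by (simp add: c'_def)
  have "\<bar>c' - c\<bar> = \<bar>s - (l * c + (1 - l) * \<theta>)\<bar> / l"
    using l by (simp add: c'_def field_simps abs_divide)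
  also have "\<dots> \<le> r" using s l by (simp add: divide_le_eq mult.commute)
  finally have "f c' < \<infinity>" using r by blast
  then show "f s < \<infinity>" unfolding sc using conv_fin[OF cf nn _ th] l by auto
qed

lemma intp_segI:
  assumes cf: "convex_fun f" and nn: "\<And>x. 0 \<le> f x"
    and "intp f c" and th: "f \<theta> < \<infinity>" and l: "0 < l" "l \<le> 1"
  shows "intp f (l * c + (1 - l) * \<theta>)"
proof -
  obtain r where r: "r > 0" "\<And>s. \<bar>s - c\<bar> \<le> r \<Longrightarrow> f s < \<infinity>" using assms(3) unfolding intp_def by auto
  show ?thesis unfolding intp_def
    using intp_seg[OF cf nn r th l] r(1) l by (intro exI[of _ "l * r"]) auto
qed



lemma tilt:
  assumes P: "prob_space P" "sets P = sets borel"
    and G: "\<And>\<theta>. (\<integral>\<^sup>+x. ennreal (exp (\<theta> * x)) \<partial>P) = ennreal (G \<theta>)" and Gc: "G c > 0"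
  shows "(\<integral>\<^sup>+x. ennreal (exp (s * x)) \<partial>(density P (\<lambda>x. ennreal (exp (c * x) / G c))))
           = ennreal (G (c + s) / G c)"
    and "real_distribution (density P (\<lambda>x. ennreal (exp (c * x) / G c)))"
proof -
  have mb: "borel_measurable P = borel_measurable borel" by (rule measurable_cong_sets[OF P(2) refl])
  have *: "(\<integral>\<^sup>+x. ennreal (exp (u * x)) \<partial>(density P (\<lambda>x. ennreal (exp (c * x) / G c))))
           = ennreal (G (c + u) / G c)" for u
  proof -
    have "(\<integral>\<^sup>+x. ennreal (exp (u * x)) \<partial>(density P (\<lambda>x. ennreal (exp (c * x) / G c))))
        = (\<integral>\<^sup>+x. ennreal (exp (c * x) / G c) * ennreal (exp (u * x)) \<partial>P)"
      by (rule nn_integral_density) (auto simp: mb)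
    also have "\<dots> = (\<integral>\<^sup>+x. ennreal (1 / G c) * ennreal (exp ((c + u) * x)) \<partial>P)"
      using Gc by (intro nn_integral_cong) (simp add: ennreal_mult'[symmetric] exp_add distrib_right)
    also have "\<dots> = ennreal (1 / G c) * (\<integral>\<^sup>+x. ennreal (exp ((c + u) * x)) \<partial>P)"
      by (rule nn_integral_cmult) (simp add: mb)
    also have "\<dots> = ennreal (G (c + u) / G c)"
      using Gc G[of "c + u"] by (simp add: ennreal_mult'[symmetric])
    finally show "(\<integral>\<^sup>+x. ennreal (exp (u * x)) \<partial>(density P (\<lambda>x. ennreal (exp (c * x) / G c))))
             = ennreal (G (c + u) / G c)" .
  qed
  then show "(\<integral>\<^sup>+x. ennreal (exp (s * x)) \<partial>(density P (\<lambda>x. ennreal (exp (c * x) / G c))))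
           = ennreal (G (c + s) / G c)" .
  show "real_distribution (density P (\<lambda>x. ennreal (exp (c * x) / G c)))"
  proof -
    have "emeasure (density P (\<lambda>x. ennreal (exp (c * x) / G c))) (space (density P (\<lambda>x. ennreal (exp (c * x) / G c))))
       = (\<integral>\<^sup>+x. ennreal (exp (0 * x)) \<partial>(density P (\<lambda>x. ennreal (exp (c * x) / G c))))"
      by simp
    also have "\<dots> = 1" using *[of 0] Gc by simp
    finally have "prob_space (density P (\<lambda>x. ennreal (exp (c * x) / G c)))" by (rule prob_spaceI)
    then show ?thesis unfolding real_distribution_def real_distribution_axioms_def using P by simp
  qed
qed



lemma rd_mb: "real_distribution P \<Longrightarrow> borel_measurable P = borel_measurable borel"
  by (rule measurable_cong_sets) (auto simp: real_distribution_def real_distribution_axioms_def)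

lemma rd_int:
  assumes "real_distribution P"
  shows "integrable P (\<lambda>x. min (exp (s*x)) (exp T))"
    and "(\<integral>\<^sup>+x. ennreal (min (exp (s*x)) (exp T)) \<partial>P) = ennreal (\<integral>x. min (exp (s*x)) (exp T) \<partial>P)"
proof -
  interpret real_distribution P by fact
  show int: "integrable P (\<lambda>x. min (exp (s*x)) (exp T))"
    by (rule integrable_const_bound[where B="exp T"]) (auto simp: rd_mb[OF assms])
  show "(\<integral>\<^sup>+x. ennreal (min (exp (s*x)) (exp T)) \<partial>P) = ennreal (\<integral>x. min (exp (s*x)) (exp T) \<partial>P)"
    by (rule nn_integral_eq_integral[OF int]) simp
qed

lemma SUP_min_exp:
  fixes a :: real assumes "0 \<le> a"
  shows "(SUP n. ennreal (min a (exp (real n)))) = ennreal a"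
proof (rule antisym)
  show "(SUP n. ennreal (min a (exp (real n)))) \<le> ennreal a" by (rule SUP_least, rule ennreal_leI) simp
  define n where "n = nat \<lceil>a\<rceil>"
  have "a \<le> real n" unfolding n_def by linarith
  also have "\<dots> \<le> exp (real n)" using exp_ge_add_one_self[of "real n"] by linarith
  finally have "min a (exp (real n)) = a" by simp
  then show "ennreal a \<le> (SUP n. ennreal (min a (exp (real n))))"
    by (metis UNIV_I SUP_upper)
qed

lemma wc_int:
  assumes \<mu>: "\<And>k. real_distribution (\<mu> k)" and M: "real_distribution M" and wc: "weak_conv_m \<mu> M"
  shows "(\<lambda>k. \<integral>x. min (exp (s*x)) (exp T) \<partial>\<mu> k) \<longlonglongrightarrow> (\<integral>x. min (exp (s*x)) (exp T) \<partial>M)"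
  by (rule weak_conv_imp_integral_bdd_continuous_conv[OF \<mu> M wc, where B="exp T"])
     (auto intro!: continuous_intros)

lemma ident_le:
  assumes \<mu>: "\<And>k. real_distribution (\<mu> k)" and M: "real_distribution M" and wc: "weak_conv_m \<mu> M"
    and G: "\<And>k. (\<integral>\<^sup>+x. ennreal (exp (s*x)) \<partial>\<mu> k) = ennreal (G k)"
    and lim: "G \<longlonglongrightarrow> L" and Gnn: "\<And>k. 0 \<le> G k"
  shows "(\<integral>\<^sup>+x. ennreal (exp (s*x)) \<partial>M) \<le> ennreal L"
proof -
  have bT: "(\<integral>x. min (exp (s*x)) (exp T) \<partial>M) \<le> L" for T
  proof (rule LIMSEQ_le[OF wc_int[OF \<mu> M wc] lim])
    show "\<exists>N. \<forall>n\<ge>N. (\<integral>x. min (exp (s*x)) (exp T) \<partial>\<mu> n) \<le> G n"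
    proof (intro exI allI impI)
      fix n
      have "ennreal (\<integral>x. min (exp (s*x)) (exp T) \<partial>\<mu> n) = (\<integral>\<^sup>+x. ennreal (min (exp (s*x)) (exp T)) \<partial>\<mu> n)"
        by (rule rd_int(2)[OF \<mu>, symmetric])
      also have "\<dots> \<le> (\<integral>\<^sup>+x. ennreal (exp (s*x)) \<partial>\<mu> n)" by (intro nn_integral_mono) simp
      also have "\<dots> = ennreal (G n)" by (rule G)
      finally have "ennreal (\<integral>x. min (exp (s*x)) (exp T) \<partial>\<mu> n) \<le> ennreal (G n)" .
      moreover have "0 \<le> (\<integral>x. min (exp (s*x)) (exp T) \<partial>\<mu> n)" by (rule integral_nonneg_AE) simp
      ultimately show "(\<integral>x. min (exp (s*x)) (exp T) \<partial>\<mu> n) \<le> G n"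
        using ennreal_le_iff[OF Gnn[of n]] by simp
    qed
  qed
  have inc: "incseq (\<lambda>n x. ennreal (min (exp (s*x)) (exp (real n))))"
    by (auto simp: incseq_def le_fun_def intro!: ennreal_leI) (meson min.cobounded2 exp_le_cancel_iff of_nat_le_iff order_trans)
  have "(\<integral>\<^sup>+x. ennreal (exp (s*x)) \<partial>M) = (\<integral>\<^sup>+x. (SUP n. ennreal (min (exp (s*x)) (exp (real n)))) \<partial>M)"
    by (simp add: SUP_min_exp)
  also have "\<dots> = (SUP n. \<integral>\<^sup>+x. ennreal (min (exp (s*x)) (exp (real n))) \<partial>M)"
    by (rule nn_integral_monotone_convergence_SUP[OF inc]) (simp add: rd_mb[OF M])
  also have "\<dots> \<le> ennreal L"
  proof (rule SUP_least)
    fix n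
    show "(\<integral>\<^sup>+x. ennreal (min (exp (s*x)) (exp (real n))) \<partial>M) \<le> ennreal L"
      unfolding rd_int(2)[OF M] using bT[of "real n"] by (rule ennreal_leI)
  qed
  finally show ?thesis .
qed



lemma exp_neg_lim: "\<kappa> > 0 \<Longrightarrow> (\<lambda>n. exp (- \<kappa> * real n)) \<longlonglongrightarrow> 0"
proof -
  assume k: "\<kappa> > 0"
  have "(\<lambda>n. exp (- \<kappa>) ^ n) \<longlonglongrightarrow> 0" by (rule LIMSEQ_power_zero) (use k in simp)
  moreover have "exp (- \<kappa> * real n) = exp (- \<kappa>) ^ n" for n
    by (metis exp_of_nat_mult mult.commute)
  ultimately show ?thesis by simp
qed

lemma pt_bound:
  fixes s x T \<kappa> :: real
  assumes "\<kappa> > 0"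
  shows "exp (s*x) \<le> min (exp (s*x)) (exp T) + exp (- \<kappa> * T) * exp ((s * (1 + \<kappa>)) * x)"
proof (cases "s * x \<le> T")
  case True
  have "0 \<le> exp (- \<kappa> * T) * exp ((s * (1 + \<kappa>)) * x)" by (rule mult_nonneg_nonneg) simp_all
  moreover have "exp (s*x) \<le> exp T" using True by simp
  ultimately show ?thesis by (simp add: min_def)
next
  case False
  have "exp ((s * (1 + \<kappa>)) * x) = exp (s*x) * exp (\<kappa> * (s * x))" by (simp add: exp_add[symmetric] algebra_simps)
  then have "exp (- \<kappa> * T) * exp ((s * (1 + \<kappa>)) * x) = exp (s*x) * exp (\<kappa> * (s * x) - \<kappa> * T)"
    by (simp add: exp_diff exp_minus field_simps)
  moreover have "exp (\<kappa> * (s * x) - \<kappa> * T) \<ge> 1" using False assms by (simp add: algebra_simps)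
  ultimately have "exp (s*x) \<le> exp (- \<kappa> * T) * exp ((s * (1 + \<kappa>)) * x)"
    by (metis mult_cancel_left1 mult_left_mono exp_ge_zero)
  then show ?thesis by (smt (verit) exp_gt_zero min_def)
qed

lemma ident_ge:
  assumes \<mu>: "\<And>k. real_distribution (\<mu> k)" and M: "real_distribution M" and wc: "weak_conv_m \<mu> M"
    and G: "\<And>k. (\<integral>\<^sup>+x. ennreal (exp (s*x)) \<partial>\<mu> k) = ennreal (G k)"
    and G': "\<And>k. (\<integral>\<^sup>+x. ennreal (exp ((s * (1 + \<kappa>))*x)) \<partial>\<mu> k) = ennreal (G' k)"
    and lim: "G \<longlonglongrightarrow> L" and lim': "G' \<longlonglongrightarrow> L'" and G'nn: "\<And>k. 0 \<le> G' k"
    and k: "\<kappa> > 0"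
    and X: "(\<integral>\<^sup>+x. ennreal (exp (s*x)) \<partial>M) = ennreal X" "0 \<le> X"
  shows "L \<le> X"
proof -
  have bT: "L \<le> X + exp (- \<kappa> * T) * L'" for T
  proof -
    define g where "g x = min (exp (s*x)) (exp T)" for x
    have L1: "L \<le> (\<integral>x. g x \<partial>M) + exp (- \<kappa> * T) * L'"
    proof (rule LIMSEQ_le[OF lim])
      show "(\<lambda>k. (\<integral>x. g x \<partial>\<mu> k) + exp (- \<kappa> * T) * G' k) \<longlonglongrightarrow> (\<integral>x. g x \<partial>M) + exp (- \<kappa> * T) * L'"
        unfolding g_def by (intro tendsto_intros wc_int[OF \<mu> M wc] lim')
      show "\<exists>N. \<forall>n\<ge>N. G n \<le> (\<integral>x. g x \<partial>\<mu> n) + exp (- \<kappa> * T) * G' n"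
      proof (intro exI allI impI)
        fix n
        have mb: "borel_measurable (\<mu> n) = borel_measurable borel" by (rule rd_mb[OF \<mu>])
        have gnn: "0 \<le> (\<integral>x. g x \<partial>\<mu> n)" unfolding g_def by (rule integral_nonneg_AE) simp
        have "ennreal (G n) = (\<integral>\<^sup>+x. ennreal (exp (s*x)) \<partial>\<mu> n)" by (rule G[symmetric])
        also have "\<dots> \<le> (\<integral>\<^sup>+x. ennreal (g x + exp (- \<kappa> * T) * exp ((s * (1 + \<kappa>))*x)) \<partial>\<mu> n)"
          by (intro nn_integral_mono ennreal_leI) (unfold g_def, rule pt_bound[OF k])
        also have "\<dots> = (\<integral>\<^sup>+x. ennreal (g x) + ennreal (exp (- \<kappa> * T)) * ennreal (exp ((s * (1 + \<kappa>))*x)) \<partial>\<mu> n)"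
          by (intro nn_integral_cong) (simp add: g_def ennreal_plus ennreal_mult')
        also have "\<dots> = (\<integral>\<^sup>+x. ennreal (g x) \<partial>\<mu> n) + ennreal (exp (- \<kappa> * T)) * (\<integral>\<^sup>+x. ennreal (exp ((s * (1 + \<kappa>))*x)) \<partial>\<mu> n)"
          by (subst nn_integral_add) (auto simp: mb g_def nn_integral_cmult)
        also have "\<dots> = ennreal ((\<integral>x. g x \<partial>\<mu> n) + exp (- \<kappa> * T) * G' n)"
          unfolding g_def rd_int(2)[OF \<mu>] G' using G'nn[of n]
          by (simp add: ennreal_mult'[symmetric] ennreal_plus[symmetric] integral_nonneg_AE del: ennreal_plus)
        finally show "G n \<le> (\<integral>x. g x \<partial>\<mu> n) + exp (- \<kappa> * T) * G' n"
          using G'nn[of n] gnn by (subst (asm) ennreal_le_iff) auto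
      qed
    qed
    have "ennreal (\<integral>x. g x \<partial>M) = (\<integral>\<^sup>+x. ennreal (g x) \<partial>M)" unfolding g_def by (rule rd_int(2)[OF M, symmetric])
    also have "\<dots> \<le> (\<integral>\<^sup>+x. ennreal (exp (s*x)) \<partial>M)" by (intro nn_integral_mono) (simp add: g_def)
    finally have "(\<integral>x. g x \<partial>M) \<le> X" using X by (simp add: ennreal_le_iff)
    then show ?thesis using L1 by linarith
  qed
  have "(\<lambda>n. X + exp (- \<kappa> * real n) * L') \<longlonglongrightarrow> X + 0 * L'"
    by (intro tendsto_intros exp_neg_lim[OF k])
  then show ?thesis using bT by (intro LIMSEQ_le_const[where X="\<lambda>n. X + exp (- \<kappa> * real n) * L'"]) auto
qed



lemma markov_tail:
  assumes Q: "real_distribution Q" and h: "h > 0"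
    and A: "(\<integral>\<^sup>+x. ennreal (exp (h*x)) \<partial>Q) \<le> ennreal A"
    and B: "(\<integral>\<^sup>+x. ennreal (exp ((-h)*x)) \<partial>Q) \<le> ennreal B" and AB: "0 \<le> A" "0 \<le> B"
  shows "emeasure Q (UNIV - {-R<..R}) \<le> ennreal ((A + B) / exp (h*R))"
proof -
  interpret real_distribution Q by fact
  have mb: "borel_measurable Q = borel_measurable borel" by (rule rd_mb[OF Q])
  have sp: "space Q = UNIV" using sets_eq_imp_space_eq[OF events_eq_borel] by simp
  define e where "e = exp (h*R)"
  have e: "e > 0" by (simp add: e_def)
  have pt: "indicator (UNIV - {-R<..R}) x \<le> ennreal (exp (h*x) / e + exp ((-h)*x) / e)" for x :: real
  proof (cases "x \<in> {-R<..R}")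
    case False
    then have "x > R \<or> x \<le> -R" by auto
    then have "1 \<le> exp (h*x) / e + exp ((-h)*x) / e"
    proof
      assume "x > R"
      then have "exp (h*R) \<le> exp (h*x)" using h by simp
      then have "1 \<le> exp (h*x) / e" using e by (simp add: e_def)
      moreover have "0 \<le> exp ((-h)*x) / e" using e by simp
      ultimately show ?thesis by linarith
    next
      assume "x \<le> -R"
      then have "h*R \<le> h*(-x)" using h by (intro mult_left_mono) auto
      then have "exp (h*R) \<le> exp ((-h)*x)" by simp
      then have "1 \<le> exp ((-h)*x) / e" using e by (simp add: e_def)
      moreover have "0 \<le> exp (h*x) / e" using e by simp
      ultimately show ?thesis by linarith
    qed
    then show ?thesis using False by simp
  qed (simp)
  have "emeasure Q (UNIV - {-R<..R}) = (\<integral>\<^sup>+x. indicator (UNIV - {-R<..R}) x \<partial>Q)"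
    by (rule nn_integral_indicator[symmetric]) simp
  also have "\<dots> \<le> (\<integral>\<^sup>+x. ennreal (exp (h*x) / e + exp ((-h)*x) / e) \<partial>Q)"
    by (intro nn_integral_mono pt)
  also have "\<dots> = (\<integral>\<^sup>+x. ennreal (1/e) * ennreal (exp (h*x)) + ennreal (1/e) * ennreal (exp ((-h)*x)) \<partial>Q)"
    using e by (intro nn_integral_cong) (simp add: ennreal_plus ennreal_mult'[symmetric])
  also have "\<dots> = ennreal (1/e) * (\<integral>\<^sup>+x. ennreal (exp (h*x)) \<partial>Q) + ennreal (1/e) * (\<integral>\<^sup>+x. ennreal (exp ((-h)*x)) \<partial>Q)"
    by (subst nn_integral_add) (auto simp: mb nn_integral_cmult)
  also have "\<dots> \<le> ennreal (1/e) * ennreal A + ennreal (1/e) * ennreal B"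
    by (intro add_mono mult_left_mono A B) auto
  also have "\<dots> = ennreal ((A + B) / e)"
    using e AB by (simp add: ennreal_plus[symmetric] ennreal_mult'[symmetric] add_divide_distrib del: ennreal_plus)
  finally show ?thesis by (simp add: e_def)
qed

lemma tightI:
  assumes Q: "\<And>n. real_distribution (Q n)" and h: "h > 0"
    and A: "\<And>n. (\<integral>\<^sup>+x. ennreal (exp (h*x)) \<partial>Q n) \<le> ennreal A"
    and B: "\<And>n. (\<integral>\<^sup>+x. ennreal (exp ((-h)*x)) \<partial>Q n) \<le> ennreal B" and AB: "0 \<le> A" "0 \<le> B"
  shows "tight Q"
  unfolding tight_def
proof (intro conjI allI impI)
  show "real_distribution (Q n)" for n by fact
  fix \<epsilon> :: real assume eps: "\<epsilon> > 0"
  define R where "R = ln ((A + B) / \<epsilon> + 2) / h"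
  have q: "0 \<le> (A + B) / \<epsilon>" using AB eps by simp
  have R: "R > 0" unfolding R_def using h q by (intro divide_pos_pos ln_gt_zero) auto
  have eR: "exp (h * R) = (A + B) / \<epsilon> + 2" unfolding R_def using h q by simp
  have small: "(A + B) / exp (h*R) < \<epsilon>"
    unfolding eR using eps AB q by (simp add: divide_less_eq field_simps) 
  show "\<exists>a b. a < b \<and> (\<forall>n. 1 - \<epsilon> < measure (Q n) {a<..b})"
  proof (intro exI conjI allI)
    show "-R < R" using R by simp
    fix n
    interpret real_distribution "Q n" by fact
    have sp: "space (Q n) = UNIV" using sets_eq_imp_space_eq[OF events_eq_borel] by simp
    have "emeasure (Q n) (UNIV - {-R<..R}) \<le> ennreal ((A + B) / exp (h*R))"
      by (rule markov_tail[OF Q h A B AB])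
    then have "measure (Q n) (UNIV - {-R<..R}) \<le> (A + B) / exp (h*R)"
      unfolding measure_def by (rule enn2real_leI[rotated]) (use AB in auto)
    moreover have "measure (Q n) (UNIV - {-R<..R}) = 1 - measure (Q n) {-R<..R}"
      using prob_compl[of "{-R<..R}"] sp by simp
    ultimately show "1 - \<epsilon> < measure (Q n) {-R<..R}" using small by linarith
  qed
qed



lemma construct:
  fixes \<nu> :: "nat \<Rightarrow> real measure" and F :: "nat \<Rightarrow> real \<Rightarrow> real"
  assumes \<nu>: "\<And>n. prob_space (\<nu> n)" "\<And>n. sets (\<nu> n) = sets borel"
    and F: "\<And>n \<theta>. (\<integral>\<^sup>+x. ennreal (exp (\<theta> * x)) \<partial>\<nu> n) = ennreal (F n \<theta>)"
    and Fpos: "\<And>n \<theta>. 0 < F n \<theta>"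
    and lim: "\<And>t. t \<in> U \<Longrightarrow> (\<lambda>n. F n t) \<longlonglongrightarrow> \<Phi> t"
    and Uo: "\<And>t. t \<in> U \<Longrightarrow> \<exists>r>0. \<forall>s. \<bar>s - t\<bar> \<le> r \<longrightarrow> s \<in> U"
    and c: "c \<in> U" "\<Phi> c > 0"
  shows "\<exists>M. real_distribution M \<and> (\<forall>t\<in>U. (\<integral>\<^sup>+x. ennreal (exp ((t - c) * x)) \<partial>M) = ennreal (\<Phi> t / \<Phi> c))"
proof -
  define \<mu> where "\<mu> n = density (\<nu> n) (\<lambda>x. ennreal (exp (c * x) / F n c))" for n
  define G where "G n s = F n (c + s) / F n c" for n s
  have \<mu>G: "(\<integral>\<^sup>+x. ennreal (exp (s * x)) \<partial>\<mu> n) = ennreal (G n s)" for n s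
    unfolding \<mu>_def G_def by (rule tilt(1)[OF \<nu>(1) \<nu>(2) F Fpos])
  have \<mu>rd: "real_distribution (\<mu> n)" for n
    unfolding \<mu>_def by (rule tilt(2)[OF \<nu>(1) \<nu>(2) F Fpos])
  have Gnn: "0 \<le> G n s" for n s unfolding G_def using Fpos[of n c] Fpos[of n "c+s"] by simp
  have Glim: "(\<lambda>n. G n s) \<longlonglongrightarrow> \<Phi> (c + s) / \<Phi> c" if "c + s \<in> U" for s
    unfolding G_def by (intro tendsto_divide lim that c) (use c in auto)
  obtain r where r: "r > 0" "\<And>s. \<bar>s - c\<bar> \<le> r \<Longrightarrow> s \<in> U" using Uo[OF c(1)] by auto
  have "Bseq (\<lambda>n. G n r)" using Glim[of r] r by (intro convergent_imp_Bseq convergentI) auto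
  then obtain A where A: "A > 0" "\<And>n. norm (G n r) \<le> A" unfolding Bseq_def by auto
  have "Bseq (\<lambda>n. G n (-r))" using Glim[of "-r"] r by (intro convergent_imp_Bseq convergentI) auto
  then obtain B where B: "B > 0" "\<And>n. norm (G n (-r)) \<le> B" unfolding Bseq_def by auto
  have "tight \<mu>"
  proof (rule tightI[OF \<mu>rd r(1)])
    show "(\<integral>\<^sup>+x. ennreal (exp (r * x)) \<partial>\<mu> n) \<le> ennreal A" for n
      unfolding \<mu>G using A(2)[of n] Gnn[of n r] by (intro ennreal_leI) simp
    show "(\<integral>\<^sup>+x. ennreal (exp ((-r) * x)) \<partial>\<mu> n) \<le> ennreal B" for n
      unfolding \<mu>G using B(2)[of n] Gnn[of n "-r"] by (intro ennreal_leI) simp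
  qed (use A B in auto)
  from tight_imp_convergent_subsubsequence[OF this strict_mono_id]
  obtain \<sigma> M where \<sigma>: "strict_mono \<sigma>" and M: "real_distribution M" and wc: "weak_conv_m (\<mu> \<circ> id \<circ> \<sigma>) M"
    by blast
  have wc': "weak_conv_m (\<lambda>k. \<mu> (\<sigma> k)) M" using wc by (simp add: comp_def)
  have \<mu>rd': "real_distribution (\<mu> (\<sigma> k))" for k by (rule \<mu>rd)
  have Glim': "(\<lambda>k. G (\<sigma> k) s) \<longlonglongrightarrow> \<Phi> (c + s) / \<Phi> c" if "c + s \<in> U" for s
    using LIMSEQ_subseq_LIMSEQ[OF Glim[OF that] \<sigma>] by (simp add: comp_def)
  show ?thesis
  proof (intro exI conjI ballI)
    show "real_distribution M" by fact
    fix t assume t: "t \<in> U"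
    define s where "s = t - c"
    have cs: "c + s \<in> U" using t by (simp add: s_def)
    have le: "(\<integral>\<^sup>+x. ennreal (exp (s * x)) \<partial>M) \<le> ennreal (\<Phi> (c + s) / \<Phi> c)"
      by (rule ident_le[OF \<mu>rd' M wc' \<mu>G Glim'[OF cs] Gnn])
    show "(\<integral>\<^sup>+x. ennreal (exp ((t - c) * x)) \<partial>M) = ennreal (\<Phi> t / \<Phi> c)"
    proof (cases "s = 0")
      case True
      interpret real_distribution M by fact
      have "space M = UNIV" using sets_eq_imp_space_eq[OF events_eq_borel] by simp
      then show ?thesis using True c(2) emeasure_space_1 by (simp add: s_def)
    next
      case False
      obtain \<rho> where \<rho>: "\<rho> > 0" "\<And>u. \<bar>u - t\<bar> \<le> \<rho> \<Longrightarrow> u \<in> U" using Uo[OF t] by auto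
      define \<kappa> where "\<kappa> = \<rho> / \<bar>s\<bar>"
      have k: "\<kappa> > 0" using \<rho> False by (simp add: \<kappa>_def)
      have "s * (1 + \<kappa>) = s + sgn s * \<rho>" using False by (simp add: \<kappa>_def field_simps sgn_if)
      then have "\<bar>(c + s * (1 + \<kappa>)) - t\<bar> \<le> \<rho>" using \<rho>(1) by (simp add: s_def sgn_if)
      then have cs': "c + s * (1 + \<kappa>) \<in> U" by (rule \<rho>(2))
      define X where "X = enn2real (\<integral>\<^sup>+x. ennreal (exp (s * x)) \<partial>M)"
      have Xe: "(\<integral>\<^sup>+x. ennreal (exp (s * x)) \<partial>M) = ennreal X"
        unfolding X_def using le by (intro ennreal_enn2real[symmetric]) (simp add: le_less_trans[OF _ ennreal_less_top])
      have ge: "\<Phi> (c + s) / \<Phi> c \<le> X"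
        by (rule ident_ge[OF \<mu>rd' M wc' \<mu>G \<mu>G Glim'[OF cs] Glim'[OF cs'] Gnn k Xe]) (simp add: X_def)
      have "(\<integral>\<^sup>+x. ennreal (exp (s * x)) \<partial>M) = ennreal (\<Phi> (c + s) / \<Phi> c)"
        using le ge Xe by (simp add: antisym ennreal_leI)
      then show ?thesis by (simp add: s_def)
    qed
  qed
qed



lemma mgf_convex:
  assumes sP: "sets P = sets borel"
  shows "convex_fun (mgf P)"
  unfolding convex_fun_def
proof (intro allI impI)
  fix x y l :: real assume l: "0 \<le> l \<and> l \<le> 1"
  have mb: "borel_measurable P = borel_measurable borel" by (rule measurable_cong_sets[OF sP refl])
  have "(\<integral>\<^sup>+t. ennreal (exp ((l * x + (1 - l) * y) * t)) \<partial>P)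
      \<le> (\<integral>\<^sup>+t. ennreal (l * exp (x * t) + (1 - l) * exp (y * t)) \<partial>P)"
  proof (intro nn_integral_mono ennreal_leI)
    fix t
    have "exp (l * (x*t) + (1 - l) * (y*t)) \<le> l * exp (x*t) + (1 - l) * exp (y*t)"
      using convex_onD[OF convex_on_exp[of 1], of "1 - l" "x*t" "y*t"] l by simp
    then show "exp ((l * x + (1 - l) * y) * t) \<le> l * exp (x * t) + (1 - l) * exp (y * t)"
      by (simp add: algebra_simps)
  qed
  also have "\<dots> = (\<integral>\<^sup>+t. ennreal l * ennreal (exp (x * t)) + ennreal (1 - l) * ennreal (exp (y * t)) \<partial>P)"
    using l by (intro nn_integral_cong) (simp add: ennreal_plus ennreal_mult')
  also have "\<dots> = ennreal l * (\<integral>\<^sup>+t. ennreal (exp (x * t)) \<partial>P) + ennreal (1 - l) * (\<integral>\<^sup>+t. ennreal (exp (y * t)) \<partial>P)"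
    by (subst nn_integral_add) (auto simp: mb nn_integral_cmult)
  finally have *: "(\<integral>\<^sup>+t. ennreal (exp ((l * x + (1 - l) * y) * t)) \<partial>P) \<le> \<dots>" .
  have "mgf P (l * x + (1 - l) * y) \<le> enn2ereal (ennreal l * (\<integral>\<^sup>+t. ennreal (exp (x * t)) \<partial>P) + ennreal (1 - l) * (\<integral>\<^sup>+t. ennreal (exp (y * t)) \<partial>P))"
    unfolding mgf_def using * by (simp add: less_eq_ennreal.rep_eq)
  also have "\<dots> = ereal l * mgf P x + ereal (1 - l) * mgf P y"
    using l by (simp add: mgf_def plus_ennreal.rep_eq times_ennreal.rep_eq enn2ereal_ennreal)
  finally show "mgf P (l * x + (1 - l) * y) \<le> ereal l * mgf P x + ereal (1 - l) * mgf P y" .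
qed

lemma mgf_nn: "0 \<le> mgf P x"
  by (simp add: mgf_def)

lemma mgf_lsc_seq:
  assumes sP: "sets P = sets borel" and p: "p \<longlonglongrightarrow> \<theta>" and y: "y < mgf P \<theta>"
  shows "\<forall>\<^sub>F k in sequentially. y < mgf P (p k)"
proof (cases "y < 0")
  case True
  have "y < mgf P x" for x using True mgf_nn[of P x] by (simp add: less_le_trans)
  then show ?thesis by (intro always_eventually allI)
next
  case False
  then obtain r where yr: "y = ereal r" "0 \<le> r" using y by (cases y) auto
  have mb: "borel_measurable P = borel_measurable borel" by (rule measurable_cong_sets[OF sP refl])
  have lx: "liminf (\<lambda>k. ennreal (exp (p k * x))) = ennreal (exp (\<theta> * x))" for x
    by (intro lim_imp_Liminf trivial_limit_sequentially tendsto_ennrealI tendsto_intros p)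
  have "(\<integral>\<^sup>+x. ennreal (exp (\<theta> * x)) \<partial>P) = (\<integral>\<^sup>+x. liminf (\<lambda>k. ennreal (exp (p k * x))) \<partial>P)"
    by (simp add: lx)
  also have "\<dots> \<le> liminf (\<lambda>k. (\<integral>\<^sup>+x. ennreal (exp (p k * x)) \<partial>P))"
    by (rule nn_integral_liminf) (simp add: mb)
  finally have le: "(\<integral>\<^sup>+x. ennreal (exp (\<theta> * x)) \<partial>P) \<le> liminf (\<lambda>k. (\<integral>\<^sup>+x. ennreal (exp (p k * x)) \<partial>P))" .
  have "ennreal r < (\<integral>\<^sup>+x. ennreal (exp (\<theta> * x)) \<partial>P)"
    using y yr unfolding mgf_def by (simp add: less_ennreal.rep_eq enn2ereal_ennreal)
  then have "ennreal r < liminf (\<lambda>k. (\<integral>\<^sup>+x. ennreal (exp (p k * x)) \<partial>P))" using le by (rule less_le_trans)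
  then have "\<forall>\<^sub>F k in sequentially. ennreal r < (\<integral>\<^sup>+x. ennreal (exp (p k * x)) \<partial>P)" by (rule less_LiminfD)
  then show ?thesis
    by (rule eventually_mono) (use yr in \<open>simp add: mgf_def less_ennreal.rep_eq enn2ereal_ennreal\<close>)
qed

lemma conv_upper:
  assumes cf: "convex_fun g" and nn: "\<And>x. 0 \<le> g x" and gc: "g c < \<infinity>" and gt: "g \<theta> < \<infinity>"
    and l: "l \<longlonglongrightarrow> 0" "\<And>k. 0 \<le> l k" "\<And>k. l k \<le> 1" and y: "g \<theta> < y"
  shows "\<forall>\<^sub>F k in sequentially. g (l k * c + (1 - l k) * \<theta>) < y"
proof -
  obtain a where a: "g c = ereal a" using nn[of c] gc by (cases "g c") auto
  obtain b where b: "g \<theta> = ereal b" using nn[of \<theta>] gt by (cases "g \<theta>") auto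
  obtain z where z0: "ereal b < ereal z" "ereal z < y" using ereal_dense2[of "ereal b" y] y b by auto
  then have z: "b < z" "ereal z < y" by auto
  have "(\<lambda>k. l k * a + (1 - l k) * b) \<longlonglongrightarrow> 0 * a + (1 - 0) * b" by (intro tendsto_intros l)
  then have "\<forall>\<^sub>F k in sequentially. l k * a + (1 - l k) * b < z" using z by (simp add: order_tendstoD)
  then show ?thesis
  proof (rule eventually_mono)
    fix k assume k: "l k * a + (1 - l k) * b < z"
    have "g (l k * c + (1 - l k) * \<theta>) \<le> ereal (l k) * g c + ereal (1 - l k) * g \<theta>"
      using cf l(2,3) unfolding convex_fun_def by blast
    also have "\<dots> = ereal (l k * a + (1 - l k) * b)" using a b by simp
    also have "\<dots> < ereal z" using k by simp
    also have "\<dots> < y" by (rule z(2))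
    finally show "g (l k * c + (1 - l k) * \<theta>) < y" .
  qed
qed

lemma seg_eq:
  fixes g1 g2 :: "real \<Rightarrow> ereal"
  assumes eq: "\<And>k. g1 (p k) = g2 (p k)"
    and a1: "\<And>y. y < g1 \<theta> \<Longrightarrow> \<forall>\<^sub>F k in sequentially. y < g1 (p k)"
    and a2: "\<And>y. y < g2 \<theta> \<Longrightarrow> \<forall>\<^sub>F k in sequentially. y < g2 (p k)"
    and b1: "\<And>y. g1 \<theta> < \<infinity> \<Longrightarrow> g1 \<theta> < y \<Longrightarrow> \<forall>\<^sub>F k in sequentially. g1 (p k) < y"
    and b2: "\<And>y. g2 \<theta> < \<infinity> \<Longrightarrow> g2 \<theta> < y \<Longrightarrow> \<forall>\<^sub>F k in sequentially. g2 (p k) < y"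
  shows "g1 \<theta> = g2 \<theta>"
proof (rule ccontr)
  assume ne: "g1 \<theta> \<noteq> g2 \<theta>"
  show False
  proof (cases "g1 \<theta> < g2 \<theta>")
    case True
    then obtain y where y: "g1 \<theta> < y" "y < g2 \<theta>" using ereal_dense2 by blast
    have "g1 \<theta> < \<infinity>" by (rule less_le_trans[OF True]) simp
    have "\<forall>\<^sub>F k in sequentially. g1 (p k) < y \<and> y < g2 (p k)"
      by (intro eventually_conj b1 a2 y \<open>g1 \<theta> < \<infinity>\<close>)
    then obtain k where "g1 (p k) < y" "y < g2 (p k)" by (auto dest: eventually_happens)
    then show False using eq[of k] by simp
  next
    case False
    then have F: "g2 \<theta> < g1 \<theta>" using ne by auto
    then obtain y where y: "g2 \<theta> < y" "y < g1 \<theta>" using ereal_dense2 by blast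
    have "g2 \<theta> < \<infinity>" by (rule less_le_trans[OF F]) simp
    have "\<forall>\<^sub>F k in sequentially. g2 (p k) < y \<and> y < g1 (p k)"
      by (intro eventually_conj b2 a1 y \<open>g2 \<theta> < \<infinity>\<close>)
    then obtain k where "g2 (p k) < y" "y < g1 (p k)" by (auto dest: eventually_happens)
    then show False using eq[of k] by simp
  qed
qed



theorem mainTheorem4:
  fixes fs :: "nat \<Rightarrow> real \<Rightarrow> ereal" and f :: "real \<Rightarrow> ereal"
  assumes "\<And>n. in_XB (fs n)"
    and "\<And>n. in_XM' (fs n)"
    and "in_XM' f"
    and "AW_conv fs f"
  shows "is_MGF f \<or> f 0 < 1 \<or> mimics_MGF f"
proof -
  have "\<forall>n. \<exists>M. real_prob_measure M \<and> (\<exists>K. compact K \<and> K \<in> sets M \<and> measure M K = 1) \<and> fs n = mgf M"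
    using assms(1) unfolding in_XB_def by blast
  then obtain \<nu> where \<nu>: "\<And>n. real_prob_measure (\<nu> n)"
    "\<And>n. \<exists>K. compact K \<and> K \<in> sets (\<nu> n) \<and> measure (\<nu> n) K = 1" "\<And>n. fs n = mgf (\<nu> n)"
    by metis
  have \<nu>p: "\<And>n. prob_space (\<nu> n)" "\<And>n. sets (\<nu> n) = sets borel"
    using \<nu>(1) unfolding real_prob_measure_def by auto
  define F where "F n \<theta> = enn2real (\<integral>\<^sup>+x. ennreal (exp (\<theta> * x)) \<partial>\<nu> n)" for n \<theta>
  have Fe: "(\<integral>\<^sup>+x. ennreal (exp (\<theta> * x)) \<partial>\<nu> n) = ennreal (F n \<theta>)" for n \<theta>
  proof -
    obtain K where "compact K" "K \<in> sets (\<nu> n)" "measure (\<nu> n) K = 1" using \<nu>(2)[of n] by blast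
    then have "(\<integral>\<^sup>+x. ennreal (exp (\<theta> * x)) \<partial>\<nu> n) < \<infinity>" by (intro mgf_finite_cs[OF \<nu>(1)])
    then show ?thesis unfolding F_def by simp
  qed
  have Fpos: "0 < F n \<theta>" for n \<theta>
    using mgf_pos[OF \<nu>p(1) \<nu>p(2), of n \<theta>] unfolding Fe by simp
  have Fnn: "0 \<le> F n \<theta>" for n \<theta> using Fpos[of n \<theta>] by simp
  have fsF: "fs n \<theta> = ereal (F n \<theta>)" for n \<theta>
    unfolding \<nu>(3) mgf_def Fe using Fnn[of n \<theta>] by simp
  have Fconv: "F n (l*x+(1-l)*y) \<le> l * F n x + (1-l) * F n y" if "0 \<le> l" "l \<le> 1" for n x y l
  proof -
    have "convex_fun (fs n)" using assms(2)[of n] unfolding in_XM'_def by auto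
    then have "fs n (l*x+(1-l)*y) \<le> ereal l * fs n x + ereal (1-l) * fs n y"
      using that unfolding convex_fun_def by blast
    then show ?thesis unfolding fsF by simp
  qed
  have F0: "F n 0 = 1" for n
    using fsF[of n 0] mgf_zero[OF \<nu>p(1)[of n]] \<nu>(3)[of n] by (simp add: one_ereal_def)
  note fX = assms(3) and AW = assms(4)
  have f0le: "f 0 \<le> 1" by (rule f0_le[OF fsF Fnn Fconv fX AW F0])
  have fcf: "convex_fun f" and fnn: "\<And>x. 0 \<le> f x" and flsc: "lsc_fun f" and f0fin: "f 0 < \<infinity>"
    using fX unfolding in_XM'_def by auto
  show ?thesis
  proof (cases "f 0 < 1")
    case True then show ?thesis by simp
  next
    case False
    then have f01: "f 0 = 1" using f0le by simp
    have key: "\<exists>M. real_prob_measure M \<and> (\<forall>\<theta>\<in>dom_f f. f \<theta> = mgf M \<theta>)"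
    proof (cases "\<exists>t. intp f t")
      case False
      have dom0: "\<theta> = 0" if th: "\<theta> \<in> dom_f f" for \<theta>
      proof (rule ccontr)
        assume nz: "\<theta> \<noteq> 0"
        have fth: "f \<theta> < \<infinity>" using th unfolding dom_f_def by simp
        have "intp f (\<theta>/2)" unfolding intp_def
        proof (intro exI[of _ "\<bar>\<theta>\<bar>/2"] conjI allI impI)
          show "0 < \<bar>\<theta>\<bar>/2" using nz by simp
          fix s assume s: "\<bar>s - \<theta>/2\<bar> \<le> \<bar>\<theta>\<bar>/2"
          define l where "l = s / \<theta>"
          have l: "0 \<le> l" "l \<le> 1"
          proof -
            have "\<bar>s/\<theta> - 1/2\<bar> \<le> 1/2"
            proof -
              have "s/\<theta> - 1/2 = (s - \<theta>/2) / \<theta>" using nz by (simp add: field_simps)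
              then have "\<bar>s/\<theta> - 1/2\<bar> = \<bar>s - \<theta>/2\<bar> / \<bar>\<theta>\<bar>" by (simp add: abs_divide)
              also have "\<dots> \<le> 1/2" using s nz by (simp add: divide_le_eq)
              finally show ?thesis .
            qed
            moreover have "-(s/\<theta> - 1/2) \<le> \<bar>s/\<theta> - 1/2\<bar>" "s/\<theta> - 1/2 \<le> \<bar>s/\<theta> - 1/2\<bar>"
              by (rule abs_ge_minus_self, rule abs_ge_self)
            ultimately show "0 \<le> l" "l \<le> 1" unfolding l_def by linarith+
          qed
          have "s = l * \<theta> + (1 - l) * 0" using nz by (simp add: l_def)
          then show "f s < \<infinity>" using conv_fin[OF fcf fnn fth f0fin l] by simp
        qed
        then show False using False by blast
      qed
      have rp: "real_prob_measure (return borel (0::real))"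
        unfolding real_prob_measure_def by (auto intro: prob_space_return)
      show ?thesis
      proof (intro exI conjI ballI)
        show "real_prob_measure (return borel (0::real))" by (rule rp)
        fix \<theta> assume "\<theta> \<in> dom_f f"
        then have "\<theta> = 0" by (rule dom0)
        then show "f \<theta> = mgf (return borel 0) \<theta>"
          using f01 mgf_zero[of "return borel (0::real)"] rp unfolding real_prob_measure_def by simp
      qed
    next
      case True
      then obtain t0 where t0: "intp f t0" by blast
      have "ereal (1/2) < f 0" using f01 by simp
      then obtain d where d: "d > 0" "\<And>t. \<bar>t - 0\<bar> < d \<Longrightarrow> ereal (1/2) < f t" using lsc_nbhd[OF flsc] by blast
      define l where "l = min 1 (d / (2 * (\<bar>t0\<bar> + 1)))"
      have l: "0 < l" "l \<le> 1" using d by (auto simp: l_def)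
      define c where "c = l * t0 + (1 - l) * 0"
      have cint: "intp f c" unfolding c_def by (rule intp_segI[OF fcf fnn t0 f0fin l])
      have "\<bar>c\<bar> = l * \<bar>t0\<bar>" using l by (simp add: c_def abs_mult)
      also have "\<dots> \<le> d / (2 * (\<bar>t0\<bar> + 1)) * \<bar>t0\<bar>" by (intro mult_right_mono) (auto simp: l_def)
      also have "\<dots> = d * (\<bar>t0\<bar> / (2 * (\<bar>t0\<bar> + 1)))" by simp
      also have "\<dots> < d * 1"
      proof (rule mult_strict_left_mono)
        have "0 < 2 * (\<bar>t0\<bar> + 1)" by simp
        then show "\<bar>t0\<bar> / (2 * (\<bar>t0\<bar> + 1)) < 1" by (subst divide_less_eq) auto
      qed (use d in auto)
      finally have fc: "ereal (1/2) < f c" using d(2)[of c] by simp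
      define U where "U = {t. intp f t}"
      define \<Phi> where "\<Phi> t = real_of_ereal (f t)" for t
      have intp_fin: "f t = ereal (\<Phi> t)" if it: "intp f t" for t
      proof -
        obtain r where "r > 0" "\<And>s. \<bar>s - t\<bar> \<le> r \<Longrightarrow> f s < \<infinity>" using it unfolding intp_def by blast
        then have "f t < \<infinity>" by simp
        then show ?thesis unfolding \<Phi>_def using fnn[of t] by (cases "f t") auto
      qed
      have lim: "(\<lambda>n. F n t) \<longlonglongrightarrow> \<Phi> t" if it: "t \<in> U" for t
      proof -
        obtain r where r: "r > 0" "\<And>s. \<bar>s - t\<bar> \<le> r \<Longrightarrow> f s < \<infinity>" using it unfolding U_def intp_def by blast
        show ?thesis unfolding \<Phi>_def by (rule F_conv[OF fsF Fnn Fconv fX AW r])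
      qed
      have Uo: "\<exists>r>0. \<forall>s. \<bar>s - t\<bar> \<le> r \<longrightarrow> s \<in> U" if it: "t \<in> U" for t
      proof -
        obtain r where r: "r > 0" "\<And>s. \<bar>s - t\<bar> \<le> r \<Longrightarrow> f s < \<infinity>" using it unfolding U_def intp_def by blast
        show ?thesis
        proof (intro exI[of _ "r/2"] conjI allI impI)
          show "r/2 > 0" using r by simp
          fix s assume st: "\<bar>s - t\<bar> \<le> r/2"
          have "\<forall>u. \<bar>u - s\<bar> \<le> r/2 \<longrightarrow> f u < \<infinity>"
          proof (intro allI impI)
            fix u assume "\<bar>u - s\<bar> \<le> r/2"
            then have "\<bar>u - t\<bar> \<le> r" using st by linarith
            then show "f u < \<infinity>" by (rule r(2))
          qed
          then show "s \<in> U" unfolding U_def intp_def using r by (intro CollectI exI[of _ "r/2"]) auto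
        qed
      qed
      have cU: "c \<in> U" using cint by (simp add: U_def)
      have Phic: "\<Phi> c > 0" using fc intp_fin[OF cint] by simp
      obtain M where M: "real_distribution M"
        and MI: "\<And>t. t \<in> U \<Longrightarrow> (\<integral>\<^sup>+x. ennreal (exp ((t - c) * x)) \<partial>M) = ennreal (\<Phi> t / \<Phi> c)"
        using construct[OF \<nu>p Fe Fpos lim Uo cU Phic] by blast
      define \<nu>0 where "\<nu>0 = density M (\<lambda>x. ennreal (\<Phi> c * exp ((- c) * x)))"
      have mbM: "borel_measurable M = borel_measurable borel" by (rule rd_mb[OF M])
      have s0: "sets \<nu>0 = sets borel" unfolding \<nu>0_def using M
        by (simp add: real_distribution_def real_distribution_axioms_def)
      have mg: "mgf \<nu>0 \<theta> = enn2ereal (ennreal (\<Phi> c) * (\<integral>\<^sup>+x. ennreal (exp ((\<theta> - c) * x)) \<partial>M))" for \<theta>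
      proof -
        have "(\<integral>\<^sup>+x. ennreal (exp (\<theta> * x)) \<partial>\<nu>0) = (\<integral>\<^sup>+x. ennreal (\<Phi> c * exp ((- c) * x)) * ennreal (exp (\<theta> * x)) \<partial>M)"
          unfolding \<nu>0_def by (rule nn_integral_density) (auto simp: mbM)
        also have "\<dots> = (\<integral>\<^sup>+x. ennreal (\<Phi> c) * ennreal (exp ((\<theta> - c) * x)) \<partial>M)"
          using Phic by (intro nn_integral_cong) (simp add: ennreal_mult'[symmetric] exp_add[symmetric] algebra_simps)
        also have "\<dots> = ennreal (\<Phi> c) * (\<integral>\<^sup>+x. ennreal (exp ((\<theta> - c) * x)) \<partial>M)"
          by (rule nn_integral_cmult) (simp add: mbM)
        finally show ?thesis unfolding mgf_def by simp
      qed
      have onU: "mgf \<nu>0 t = f t" if "t \<in> U" for t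
      proof -
        have "intp f t" using that by (simp add: U_def)
        have "0 \<le> \<Phi> t" using intp_fin[OF \<open>intp f t\<close>] fnn[of t] by simp
        then show ?thesis unfolding mg MI[OF that] intp_fin[OF \<open>intp f t\<close>] using Phic
          by (simp add: ennreal_mult'[symmetric])
      qed
      define lk where "lk k = 1 / real (Suc (Suc k))" for k
      have lk: "lk \<longlonglongrightarrow> 0" "\<And>k. 0 \<le> lk k" "\<And>k. lk k \<le> 1" "\<And>k. 0 < lk k"
      proof -
        have "(\<lambda>n. inverse (real (Suc n))) \<longlonglongrightarrow> 0" by (rule LIMSEQ_inverse_real_of_nat)
        then have "(\<lambda>n. inverse (real (Suc (Suc n)))) \<longlonglongrightarrow> 0" by (rule LIMSEQ_Suc)
        then show "lk \<longlonglongrightarrow> 0" unfolding lk_def by (simp add: inverse_eq_divide)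
      qed (auto simp: lk_def)
      have agree: "f \<theta> = mgf \<nu>0 \<theta>" if th: "\<theta> \<in> dom_f f" for \<theta>
      proof -
        have fth: "f \<theta> < \<infinity>" using th unfolding dom_f_def by simp
        define p where "p k = lk k * c + (1 - lk k) * \<theta>" for k
        have plim: "p \<longlonglongrightarrow> \<theta>"
        proof -
          have "(\<lambda>k. lk k * c + (1 - lk k) * \<theta>) \<longlonglongrightarrow> 0 * c + (1 - 0) * \<theta>" by (intro tendsto_intros lk(1))
          then show ?thesis unfolding p_def by simp
        qed
        have fcfin: "f c < \<infinity>" using intp_fin[OF cint] by simp
        show ?thesis
        proof (rule seg_eq[where p=p])
          fix k show "f (p k) = mgf \<nu>0 (p k)"
            using onU[of "p k"] intp_segI[OF fcf fnn cint fth lk(4)[of k] lk(3)[of k]]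
            unfolding p_def U_def by simp
        next
          fix y assume y: "y < f \<theta>"
          obtain \<delta> where \<delta>: "\<delta> > 0" "\<And>t. \<bar>t - \<theta>\<bar> < \<delta> \<Longrightarrow> y < f t" using lsc_nbhd[OF flsc y] by blast
          have "\<forall>\<^sub>F k in sequentially. dist (p k) \<theta> < \<delta>" using plim \<delta>(1) by (rule tendstoD)
          then show "\<forall>\<^sub>F k in sequentially. y < f (p k)"
            by (rule eventually_mono) (auto intro: \<delta>(2) simp: dist_real_def)
        next
          fix y assume "y < mgf \<nu>0 \<theta>"
          then show "\<forall>\<^sub>F k in sequentially. y < mgf \<nu>0 (p k)" by (rule mgf_lsc_seq[OF s0 plim])
        next
          fix y assume "f \<theta> < \<infinity>" "f \<theta> < y"
          then show "\<forall>\<^sub>F k in sequentially. f (p k) < y"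
            unfolding p_def by (intro conv_upper[OF fcf fnn fcfin _ lk(1-3)])
        next
          fix y assume "mgf \<nu>0 \<theta> < \<infinity>" "mgf \<nu>0 \<theta> < y"
          moreover have "mgf \<nu>0 c < \<infinity>" using onU[OF cU] fcfin by simp
          ultimately show "\<forall>\<^sub>F k in sequentially. mgf \<nu>0 (p k) < y"
            unfolding p_def by (intro conv_upper[OF mgf_convex[OF s0] mgf_nn _ _ lk(1-3)])
        qed
      qed
      have "0 \<in> dom_f f" using f0fin by (simp add: dom_f_def)
      then have "mgf \<nu>0 0 = 1" using agree f01 by simp
      then have "emeasure \<nu>0 (space \<nu>0) = 1" unfolding mgf_def by (simp add: one_ennreal.rep_eq[symmetric] enn2ereal_inject)
      then have "prob_space \<nu>0" by (rule prob_spaceI)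
      then have "real_prob_measure \<nu>0" using s0 by (simp add: real_prob_measure_def)
      then show ?thesis using agree by blast
    qed
    then obtain M where M: "real_prob_measure M" "\<forall>\<theta>\<in>dom_f f. f \<theta> = mgf M \<theta>" by blast
    show ?thesis
    proof (cases "is_MGF f")
      case True then show ?thesis by simp
    next
      case False then show ?thesis unfolding mimics_MGF_def using M by blast
    qed
  qed
qed

end
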